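(* Let $J_1,J_2\subseteq I$ be ideals in a Noetherian ring $R$ such that both pairs $J_1\subseteq I$ and $J_2\subseteq I$ are Aluffi torsion-free. Then $J_1+J_2\subseteq I$ is Aluffi torsion-free if and only if the pair of image ideals $\overline{J_1}\subseteq\overline I$ in $\overline R=R/J_2$ is Aluffi torsion-free.
   Context: A pair of ideals $J\subseteq I$ in a ring $R$ is called Aluffi torsion-free if $J\cap I^n=JI^{n-1}$ for all $n\ge1$ (with $I^0=R$). *)

theory Defs
  imports "HOL-Algebra.Algebra" "HOL-Algebra.Ideal_Product"
begin

fun ideal_pow :: "('a, 'b) ring_scheme \<Rightarrow> 'a set \<Rightarrow> nat \<Rightarrow> 'a set" where
  "ideal_pow R I 0 = carrier R"
| "ideal_pow R I (Suc n) = ideal_prod R I (ideal_pow R I n)"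

definition aluffi_torsion_free :: "('a, 'b) ring_scheme \<Rightarrow> 'a set \<Rightarrow> 'a set \<Rightarrow> bool" where
  "aluffi_torsion_free R J I \<longleftrightarrow>
     (\<forall>n::nat. n \<ge> 1 \<longrightarrow> J \<inter> ideal_pow R I n = ideal_prod R J (ideal_pow R I (n - 1)))"

definition quot_image :: "('a, 'b) ring_scheme \<Rightarrow> 'a set \<Rightarrow> 'a set \<Rightarrow> 'a set set" where
  "quot_image R K A = (\<lambda>a. K +>\<^bsub>R\<^esub> a) ` A"

end

theory Submission imports Defs begin
no_notation Sum_Type.Plus (infixr \<open><+>\<close> 65)

lemma (in ring) coset_eq_iff:
  assumes "ideal J R" "x \<in> carrier R" "y \<in> carrier R"
  shows "(J +> x = J +> y) \<longleftrightarrow> x \<ominus> y \<in> J"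
proof -
  interpret ideal J R by fact
  show ?thesis
  proof
    assume e: "J +> x = J +> y"
    have "x \<in> J +> x" using a_rcos_self assms by blast
    thus "x \<ominus> y \<in> J" using e a_rcos_module_minus[OF ring_axioms] assms by auto
  next
    assume "x \<ominus> y \<in> J"
    hence "x \<in> J +> y" using a_rcos_module_minus[OF ring_axioms] assms by auto
    thus "J +> x = J +> y" using a_repr_independence' assms by auto
  qed
qed

lemma img_prod:
  assumes "ring R" "ring S" "h \<in> ring_hom R S" "A \<subseteq> carrier R" "B \<subseteq> carrier R"
  shows "h ` ideal_prod R A B = ideal_prod S (h`A) (h`B)"
proof -
  interpret R: ring R by fact
  interpret S: ring S by fact
  have 1: "x \<in> carrier R \<and> h x \<in> ideal_prod S (h`A) (h`B)" if "x \<in> ideal_prod R A B" for x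
    using that
  proof (induct x rule: ideal_prod.induct)
    case (prod i j)
    have c: "i \<in> carrier R" "j \<in> carrier R" using prod assms(4,5) by auto
    have e: "h (i \<otimes>\<^bsub>R\<^esub> j) = h i \<otimes>\<^bsub>S\<^esub> h j" using ring_hom_mult[OF assms(3) c] .
    have "h i \<otimes>\<^bsub>S\<^esub> h j \<in> ideal_prod S (h`A) (h`B)"
      by (rule ideal_prod.prod) (use prod in auto)
    then show ?case using e c by simp
  next
    case (sum s1 s2)
    have e: "h (s1 \<oplus>\<^bsub>R\<^esub> s2) = h s1 \<oplus>\<^bsub>S\<^esub> h s2" using ring_hom_add[OF assms(3)] sum by simp
    have "h s1 \<oplus>\<^bsub>S\<^esub> h s2 \<in> ideal_prod S (h`A) (h`B)"
      by (rule ideal_prod.sum) (use sum in auto)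
    then show ?case using e sum by simp
  qed
  have 2: "y \<in> h ` (ideal_prod R A B \<inter> carrier R)" if "y \<in> ideal_prod S (h`A) (h`B)" for y
    using that
  proof (induct y rule: ideal_prod.induct)
    case (prod i j)
    then obtain a b where ab: "a \<in> A" "b \<in> B" "i = h a" "j = h b" by auto
    have c: "a \<in> carrier R" "b \<in> carrier R" using ab assms(4,5) by auto
    have e: "h (a \<otimes>\<^bsub>R\<^esub> b) = i \<otimes>\<^bsub>S\<^esub> j" using ring_hom_mult[OF assms(3) c] ab by simp
    have "a \<otimes>\<^bsub>R\<^esub> b \<in> ideal_prod R A B \<inter> carrier R"
      using ab c by (auto intro: ideal_prod.prod)
    then show ?case using e by (metis image_eqI)
  next
    case (sum s1 s2)
    then obtain x1 x2 where xx: "x1 \<in> ideal_prod R A B \<inter> carrier R" "x2 \<in> ideal_prod R A B \<inter> carrier R"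
      "s1 = h x1" "s2 = h x2" by auto
    have e: "h (x1 \<oplus>\<^bsub>R\<^esub> x2) = s1 \<oplus>\<^bsub>S\<^esub> s2" using ring_hom_add[OF assms(3)] xx by simp
    have "x1 \<oplus>\<^bsub>R\<^esub> x2 \<in> ideal_prod R A B \<inter> carrier R"
      using xx by (auto intro: ideal_prod.sum)
    then show ?case using e by (metis image_eqI)
  qed
  show ?thesis using 1 2 by blast
qed

lemma pow_ideal:
  assumes "ring R" "ideal I R"
  shows "ideal (ideal_pow R I n) R"
  by (induct n) (auto simp: ring.oneideal[OF assms(1)] ring.ideal_prod_is_ideal[OF assms(1) assms(2)])

lemma img_pow:
  assumes "ring R" "ring S" "h \<in> ring_hom R S" "ideal I R" "h ` carrier R = carrier S"
  shows "h ` ideal_pow R I n = ideal_pow S (h`I) n"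
proof (induct n)
  case 0 show ?case using assms(5) by (simp only: ideal_pow.simps)
next
  case (Suc n)
  have "ideal_pow R I n \<subseteq> carrier R"
    using ideal.Icarr[OF pow_ideal[OF assms(1,4), of n]] by blast
  moreover have "I \<subseteq> carrier R" using ideal.Icarr[OF assms(4)] by blast
  ultimately have "h ` ideal_prod R I (ideal_pow R I n) = ideal_prod S (h`I) (h ` ideal_pow R I n)"
    using img_prod[OF assms(1-3)] by blast
  then show ?case using Suc by (simp only: ideal_pow.simps)
qed

lemma prod_mono:
  assumes "A \<subseteq> A'"
  shows "ideal_prod R A C \<subseteq> ideal_prod R A' C"
proof
  fix x assume "x \<in> ideal_prod R A C" then show "x \<in> ideal_prod R A' C"
    by (induct x rule: ideal_prod.induct) (auto intro: ideal_prod.intros simp: subsetD[OF assms])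
qed

lemma set_add_mem: "x \<in> A <+>\<^bsub>R\<^esub> B \<longleftrightarrow> (\<exists>a\<in>A. \<exists>b\<in>B. x = a \<oplus>\<^bsub>R\<^esub> b)"
  unfolding set_add_def' by auto

lemma (in ring) prod_D:
  assumes "ideal A R" "ideal B R" "ideal C R"
  shows "ideal_prod R (A <+> B) C \<subseteq> ideal_prod R A C <+> B"
proof
  interpret A: ideal A R by fact
  interpret B: ideal B R by fact
  interpret C: ideal C R by fact
  have AC: "ideal (ideal_prod R A C) R" using ideal_prod_is_ideal assms by blast
  fix x assume "x \<in> ideal_prod R (A <+> B) C" then show "x \<in> ideal_prod R A C <+> B"
  proof (induct x rule: ideal_prod.induct)
    case (prod i j)
    then obtain a b where ab: "a \<in> A" "b \<in> B" "i = a \<oplus> b" by (auto simp: set_add_mem)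
    have "i \<otimes> j = a \<otimes> j \<oplus> b \<otimes> j" using ab prod by (simp add: l_distr A.Icarr B.Icarr C.Icarr)
    moreover have "a \<otimes> j \<in> ideal_prod R A C" using ab prod by (auto intro: ideal_prod.prod)
    moreover have "b \<otimes> j \<in> B" using ab prod B.I_r_closed C.Icarr by blast
    ultimately show ?case by (auto simp: set_add_mem)
  next
    case (sum s1 s2)
    then obtain x1 y1 x2 y2 where xy: "x1 \<in> ideal_prod R A C" "y1 \<in> B" "s1 = x1 \<oplus> y1"
      "x2 \<in> ideal_prod R A C" "y2 \<in> B" "s2 = x2 \<oplus> y2" by (auto simp: set_add_mem)
    have c: "x1 \<in> carrier R" "x2 \<in> carrier R" using xy ideal.Icarr[OF AC] by auto
    have "s1 \<oplus> s2 = (x1 \<oplus> x2) \<oplus> (y1 \<oplus> y2)" using xy c B.Icarr by (simp add: a_ac)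
    moreover have "x1 \<oplus> x2 \<in> ideal_prod R A C" using xy by (auto intro: ideal_prod.sum)
    moreover have "y1 \<oplus> y2 \<in> B" using xy B.a_closed by blast
    ultimately show ?case by (auto simp: set_add_mem)
  qed
qed

lemma (in ring) prod_E:
  assumes "ideal A R" "ideal B R" "ideal C R"
  shows "ideal_prod R A C <+> ideal_prod R B C \<subseteq> ideal_prod R (A <+> B) C"
proof
  interpret A: ideal A R by fact
  interpret B: ideal B R by fact
  have "A \<subseteq> A <+> B"
  proof
    fix a assume "a \<in> A" then have "a = a \<oplus> \<zero>" using A.Icarr by simp
    then show "a \<in> A <+> B" using \<open>a \<in> A\<close> B.a_subgroup additive_subgroup.zero_closed
      by (metis B.additive_subgroup_axioms set_add_mem)
  qed
  moreover have "B \<subseteq> A <+> B"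
  proof
    fix b assume "b \<in> B" then have "b = \<zero> \<oplus> b" using B.Icarr by simp
    then show "b \<in> A <+> B" using \<open>b \<in> B\<close> A.additive_subgroup_axioms additive_subgroup.zero_closed
      by (metis set_add_mem)
  qed
  ultimately have s: "ideal_prod R A C \<subseteq> ideal_prod R (A <+> B) C" "ideal_prod R B C \<subseteq> ideal_prod R (A <+> B) C"
    using prod_mono[of A "set_add R A B" R C] prod_mono[of B "set_add R A B" R C] by auto
  fix x assume "x \<in> set_add R (ideal_prod R A C) (ideal_prod R B C)"
  then show "x \<in> ideal_prod R (A <+> B) C" using s by (auto simp: set_add_mem intro: ideal_prod.sum)
qed


lemma (in ring) add_minus_cancel1: "x \<in> carrier R \<Longrightarrow> j \<in> carrier R \<Longrightarrow> (x \<oplus> j) \<ominus> x = j"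
  by algebra
lemma (in ring) add_minus_cancel2: "x \<in> carrier R \<Longrightarrow> c \<in> carrier R \<Longrightarrow> c \<oplus> (x \<ominus> c) = x"
  by algebra

lemma (in ring) core:
  assumes I: "ideal I R" and J1: "ideal J1 R" and J2: "ideal J2 R" and K: "ideal K R"
    and "J1 \<subseteq> I" "J2 \<subseteq> I" and tf: "J2 \<inter> ideal_prod R I K = ideal_prod R J2 K"
  shows "((J1 <+> J2) \<inter> ideal_prod R I K = ideal_prod R (J1 <+> J2) K) \<longleftrightarrow>
     ((+>) J2 ` J1 \<inter> (+>) J2 ` ideal_prod R I K = (+>) J2 ` ideal_prod R J1 K)"
proof -
  interpret I: ideal I R by fact
  interpret J1: ideal J1 R by fact
  interpret J2: ideal J2 R by fact
  interpret K: ideal K R by fact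
  define J where "J = J1 <+> J2"
  have Jid: "ideal J R" unfolding J_def using add_ideals J1 J2 by blast
  interpret J: ideal J R by fact
  have IKid: "ideal (ideal_prod R I K) R" using ideal_prod_is_ideal I K by blast
  interpret IK: ideal "ideal_prod R I K" R by fact
  have J1Kid: "ideal (ideal_prod R J1 K) R" using ideal_prod_is_ideal J1 K by blast
  interpret J1K: ideal "ideal_prod R J1 K" R by fact
  have J2Kid: "ideal (ideal_prod R J2 K) R" using ideal_prod_is_ideal J2 K by blast
  have JI: "J \<subseteq> I" unfolding J_def using assms(5,6) I.a_closed by (force simp: set_add_mem)
  have J1J: "J1 \<subseteq> J"
  proof
    fix a assume "a \<in> J1" then have "a = a \<oplus> \<zero>" using J1.Icarr by simp
    then show "a \<in> J" unfolding J_def using \<open>a \<in> J1\<close> J2.additive_subgroup_axioms additive_subgroup.zero_closed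
      by (metis set_add_mem)
  qed
  have J1K: "ideal_prod R J1 K \<subseteq> J1 \<inter> ideal_prod R I K"
    using ideal_prod_inter[OF J1 K] prod_mono[OF assms(5), of R K] by auto
  have JK: "ideal_prod R J K \<subseteq> J \<inter> ideal_prod R I K"
    using ideal_prod_inter[OF Jid K] prod_mono[OF JI, of R K] by auto
  have heq: "(J2 +> x = J2 +> y) \<longleftrightarrow> x \<ominus> y \<in> J2" if "x \<in> carrier R" "y \<in> carrier R" for x y
    using coset_eq_iff[OF J2 that] .
  show ?thesis unfolding J_def[symmetric]
  proof
    assume L: "J \<inter> ideal_prod R I K = ideal_prod R J K"
    show "(+>) J2 ` J1 \<inter> (+>) J2 ` ideal_prod R I K = (+>) J2 ` ideal_prod R J1 K"
    proof
      show "(+>) J2 ` ideal_prod R J1 K \<subseteq> (+>) J2 ` J1 \<inter> (+>) J2 ` ideal_prod R I K"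
        using J1K by auto
    next
      show "(+>) J2 ` J1 \<inter> (+>) J2 ` ideal_prod R I K \<subseteq> (+>) J2 ` ideal_prod R J1 K"
      proof
        fix y assume "y \<in> (+>) J2 ` J1 \<inter> (+>) J2 ` ideal_prod R I K"
        then obtain a b where ab: "a \<in> J1" "b \<in> ideal_prod R I K" "y = J2 +> a" "J2 +> a = J2 +> b"
          by auto
        have ca: "a \<in> carrier R" "b \<in> carrier R" using ab J1.Icarr IK.Icarr by auto
        have "b \<ominus> a \<in> J2" using heq[OF ca(2,1)] ab by auto
        moreover have "b = a \<oplus> (b \<ominus> a)" using add_minus_cancel2[OF ca(2,1)] by simp
        ultimately have "b \<in> J" unfolding J_def using ab(1) by (auto simp: set_add_mem)
        hence "b \<in> ideal_prod R J K" using L ab by auto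
        hence "b \<in> ideal_prod R J1 K <+> J2" using prod_D[OF J1 J2 K] unfolding J_def by auto
        then obtain c j where cj: "c \<in> ideal_prod R J1 K" "j \<in> J2" "b = c \<oplus> j" by (auto simp: set_add_mem)
        have cc: "c \<in> carrier R" "j \<in> carrier R" using cj J1K.Icarr J2.Icarr by auto
        have "J2 +> b = J2 +> c" using heq[OF ca(2) cc(1)] cj add_minus_cancel1[OF cc] by simp
        thus "y \<in> (+>) J2 ` ideal_prod R J1 K" using ab cj by auto
      qed
    qed
  next
    assume Q: "(+>) J2 ` J1 \<inter> (+>) J2 ` ideal_prod R I K = (+>) J2 ` ideal_prod R J1 K"
    show "J \<inter> ideal_prod R I K = ideal_prod R J K"
    proof
      show "ideal_prod R J K \<subseteq> J \<inter> ideal_prod R I K" by (rule JK)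
    next
      show "J \<inter> ideal_prod R I K \<subseteq> ideal_prod R J K"
      proof
        fix x assume x: "x \<in> J \<inter> ideal_prod R I K"
        then obtain a j where aj: "a \<in> J1" "j \<in> J2" "x = a \<oplus> j" unfolding J_def by (auto simp: set_add_mem)
        have ca: "a \<in> carrier R" "j \<in> carrier R" using aj J1.Icarr J2.Icarr by auto
        have xc: "x \<in> carrier R" using x IK.Icarr by auto
        have "J2 +> x = J2 +> a" using heq[OF xc ca(1)] aj add_minus_cancel1[OF ca] by simp
        hence "J2 +> x \<in> (+>) J2 ` J1 \<inter> (+>) J2 ` ideal_prod R I K" using aj x by auto
        then obtain c where c: "c \<in> ideal_prod R J1 K" "J2 +> x = J2 +> c" using Q by auto
        have cc: "c \<in> carrier R" using c J1K.Icarr by auto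
        have d1: "x \<ominus> c \<in> J2" using heq[OF xc cc] c by simp
        have "c \<in> ideal_prod R I K" using c J1K by auto
        hence d2: "x \<ominus> c \<in> ideal_prod R I K" using x IK.a_closed IK.a_inv_closed
          by (simp add: minus_eq)
        have "x \<ominus> c \<in> ideal_prod R J2 K" using d1 d2 tf by auto
        moreover have "x = c \<oplus> (x \<ominus> c)" using add_minus_cancel2[OF xc cc] by simp
        ultimately have "x \<in> ideal_prod R J1 K <+> ideal_prod R J2 K" using c by (auto simp: set_add_mem)
        thus "x \<in> ideal_prod R J K" using prod_E[OF J1 J2 K] unfolding J_def by auto
      qed
    qed
  qed
qed


lemma all_ge1: "(\<forall>n::nat. n \<ge> 1 \<longrightarrow> P n) \<longleftrightarrow> (\<forall>m. P (Suc m))"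
proof
  assume "\<forall>n::nat. n \<ge> 1 \<longrightarrow> P n" then show "\<forall>m. P (Suc m)" by simp
next
  assume a: "\<forall>m. P (Suc m)"
  show "\<forall>n::nat. n \<ge> 1 \<longrightarrow> P n"
  proof (intro allI impI)
    fix n :: nat assume "n \<ge> 1" then obtain m where "n = Suc m" by (cases n) auto
    then show "P n" using a by simp
  qed
qed

theorem proposition2p5:
  fixes R :: "('a, 'b) ring_scheme" and I J1 J2 :: "'a set"
  assumes "cring R" and "noetherian_ring R"
    and "ideal I R" and "ideal J1 R" and "ideal J2 R"
    and "J1 \<subseteq> I" and "J2 \<subseteq> I"
    and "aluffi_torsion_free R J1 I" and "aluffi_torsion_free R J2 I"
  shows "aluffi_torsion_free R (J1 <+>\<^bsub>R\<^esub> J2) I \<longleftrightarrow>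
         aluffi_torsion_free (R Quot J2) (quot_image R J2 J1) (quot_image R J2 I)"
proof -
  interpret R: cring R by fact
  interpret J2: ideal J2 R by fact
  have S: "ring (R Quot J2)" using J2.quotient_is_ring .
  have hom: "(+>\<^bsub>R\<^esub>) J2 \<in> ring_hom R (R Quot J2)" using J2.rcos_ring_hom .
  have surj: "(+>\<^bsub>R\<^esub>) J2 ` carrier R = carrier (R Quot J2)"
    by (auto simp: FactRing_def A_RCOSETS_def')
  have qi: "quot_image R J2 A = (+>\<^bsub>R\<^esub>) J2 ` A" for A by (simp add: quot_image_def)
  have P: "ideal (ideal_pow R I m) R" for m using pow_ideal[OF R.ring_axioms assms(3)] .
  have pow: "ideal_pow (R Quot J2) ((+>\<^bsub>R\<^esub>) J2 ` I) m = (+>\<^bsub>R\<^esub>) J2 ` ideal_pow R I m" for m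
    using img_pow[OF R.ring_axioms S hom assms(3) surj] by simp
  have prod: "ideal_prod (R Quot J2) ((+>\<^bsub>R\<^esub>) J2 ` J1) ((+>\<^bsub>R\<^esub>) J2 ` ideal_pow R I m)
      = (+>\<^bsub>R\<^esub>) J2 ` ideal_prod R J1 (ideal_pow R I m)" for m
    using img_prod[OF R.ring_axioms S hom] ideal.Icarr[OF assms(4)] ideal.Icarr[OF P[of m]]
    by (metis subsetI)
  have tf2: "J2 \<inter> ideal_prod R I (ideal_pow R I m) = ideal_prod R J2 (ideal_pow R I m)" for m
    using assms(9) unfolding aluffi_torsion_free_def by (metis diff_Suc_1 ideal_pow.simps(2) le_add1 plus_1_eq_Suc)
  have core_m: "((J1 <+>\<^bsub>R\<^esub> J2) \<inter> ideal_pow R I (Suc m) = ideal_prod R (J1 <+>\<^bsub>R\<^esub> J2) (ideal_pow R I m))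
     \<longleftrightarrow> ((+>\<^bsub>R\<^esub>) J2 ` J1 \<inter> (+>\<^bsub>R\<^esub>) J2 ` ideal_pow R I (Suc m)
          = (+>\<^bsub>R\<^esub>) J2 ` ideal_prod R J1 (ideal_pow R I m))" for m
    using R.core[OF assms(3,4,5) P[of m] assms(6,7) tf2[of m]] by simp
  show ?thesis
    unfolding aluffi_torsion_free_def all_ge1 qi diff_Suc_1 pow prod
    using core_m by simp
qed

end
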